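(* Let $\alpha\in[1,2)$, let $f_k$ ($k\in\mathbb N$) be as in an admissible system and $d_k=4^{k^2}$. There exists a constant $C>0$ such that for all $n\in\mathbb N$, all $1\le l<j\le n$ and all $1\le k\le\sqrt{\log n}$, $$\left\|S_j\big(f_k-f_k\circ T^{d_k}\big)-S_l\big(f_k-f_k\circ T^{d_k}\big)\right\|_2^2\le C(j-l)\frac{4^{(2-\alpha)k}}{k}.$$
   Context: $(\mathcal X,\mathcal B,m,T)$ is an ergodic, aperiodic probability preserving system; $\log$ is base $2$; $\|\cdot\|_2$ is the $L^2(m)$ norm. $S_n(h):=\sum_{i=0}^{n-1}h\circ T^i$. $S_\alpha(\sigma,\beta,\mu)$ denotes the stable law with characteristic function $\exp\{-\sigma^\alpha|\theta|^\alpha(1-i\beta\,\mathrm{sign}(\theta)\tan(\pi\alpha/2))+i\mu\theta\}$ ($\alpha\neq1$), resp. $\exp\{-\sigma|\theta|(1+i\beta\frac2\pi\mathrm{sign}(\theta)\ln|\theta|)+i\mu\theta\}$ ($\alpha=1$). Triangular array: on $(\Omega,\mathcal F,\mathbb P)$ let $\{X_k(m):k,m\in\mathbb N\}$ be independent with $X_k(m)\sim S_\alpha(k^{-1/\alpha},1,0)$; $Y_k(m):=X_k(m)\mathbf 1_{[2^k\le X_k(m)\le4^k]}$; $Z_k(m):=\sum_{j=8^k}^{16^k}\frac{j}{4^k}\mathbf 1_{[j/4^k\le Y_k(m)<(j+1)/4^k]}$. Let $d_k:=4^{k^2}$. An admissible system is a sequence of measurable $f_k:\mathcal X\to\mathbb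 R$ such that the family $\{f_k\circ T^j:k\in\mathbb N,0\le j<2d_k\}$ has under $m$ the same joint distribution as $\{Z_k(j+1):k\in\mathbb N,0\le j<2d_k\}$, together with $g_k:=f_k\circ T^{d_k}$. *)

theory Defs
  imports "HOL-Probability.Probability"
begin

definition mpt :: "'a measure \<Rightarrow> ('a \<Rightarrow> 'a) \<Rightarrow> bool" where
  "mpt M T \<longleftrightarrow> T \<in> M \<rightarrow>\<^sub>M M \<and> distr M M T = M"

definition ergodic :: "'a measure \<Rightarrow> ('a \<Rightarrow> 'a) \<Rightarrow> bool" where
  "ergodic M T \<longleftrightarrow> (\<forall>A \<in> sets M. T -` A \<inter> space M = A \<longrightarrow>
      measure M A = 0 \<or> measure M A = 1)"

definition aperiodic :: "'a measure \<Rightarrow> ('a \<Rightarrow> 'a) \<Rightarrow> bool" where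
  "aperiodic M T \<longleftrightarrow> (AE x in M. \<forall>n::nat. n > 0 \<longrightarrow> (T ^^ n) x \<noteq> x)"

definition birkhoff_sum :: "('a \<Rightarrow> 'a) \<Rightarrow> nat \<Rightarrow> ('a \<Rightarrow> real) \<Rightarrow> 'a \<Rightarrow> real" where
  "birkhoff_sum T n h x = (\<Sum>i<n. h ((T ^^ i) x))"

definition stable_cf :: "real \<Rightarrow> real \<Rightarrow> real \<Rightarrow> real \<Rightarrow> real \<Rightarrow> complex" where
  "stable_cf \<alpha> \<sigma> \<beta> \<mu> \<theta> =
    (if \<alpha> \<noteq> 1 then
       exp (- complex_of_real (\<sigma> powr \<alpha> * \<bar>\<theta>\<bar> powr \<alpha>)
              * (1 - \<i> * complex_of_real (\<beta> * sgn \<theta> * tan (pi * \<alpha> / 2)))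
            + \<i> * complex_of_real (\<mu> * \<theta>))
     else
       exp (- complex_of_real (\<sigma> * \<bar>\<theta>\<bar>)
              * (1 + \<i> * complex_of_real (\<beta> * (2 / pi) * sgn \<theta> * ln \<bar>\<theta>\<bar>))
            + \<i> * complex_of_real (\<mu> * \<theta>)))"

definition dk :: "nat \<Rightarrow> nat" where
  "dk k = 4 ^ (k\<^sup>2)"

definition Ytrunc :: "nat \<Rightarrow> real \<Rightarrow> real" where
  "Ytrunc k x = x * indicator {2 ^ k .. 4 ^ k} x"

definition Zdisc :: "nat \<Rightarrow> real \<Rightarrow> real" where
  "Zdisc k x = (\<Sum>j \<in> {8 ^ k .. 16 ^ k :: nat}.
      real j / 4 ^ k * indicator {real j / 4 ^ k ..< (real j + 1) / 4 ^ k} (Ytrunc k x))"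

definition adm_index :: "(nat \<times> nat) set" where
  "adm_index = {(k, j). 1 \<le> k \<and> j < 2 * dk k}"

definition admissible :: "real \<Rightarrow> 'a measure \<Rightarrow> ('a \<Rightarrow> 'a) \<Rightarrow> (nat \<Rightarrow> 'a \<Rightarrow> real) \<Rightarrow> bool" where
  "admissible \<alpha> M T f \<longleftrightarrow>
     (\<forall>k. f k \<in> borel_measurable M) \<and>
     (\<exists>(P :: (nat \<Rightarrow> nat \<Rightarrow> real) measure) (X :: nat \<Rightarrow> nat \<Rightarrow> (nat \<Rightarrow> nat \<Rightarrow> real) \<Rightarrow> real).
        prob_space P \<and>
        prob_space.indep_vars P (\<lambda>_. borel) (\<lambda>(k, m). X k m) {(k, m). 1 \<le> k \<and> 1 \<le> m} \<and>
        (\<forall>k m. 1 \<le> k \<longrightarrow> 1 \<le> m \<longrightarrow>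
           char (distr P borel (X k m)) = stable_cf \<alpha> (real k powr (-1 / \<alpha>)) 1 0) \<and>
        distr M (PiM adm_index (\<lambda>_. borel))
             (\<lambda>x. \<lambda>i \<in> adm_index. f (fst i) ((T ^^ snd i) x))
        = distr P (PiM adm_index (\<lambda>_. borel))
             (\<lambda>\<omega>. \<lambda>i \<in> adm_index. Zdisc (fst i) (X (fst i) (snd i + 1) \<omega>)))"

end

theory Submission
  imports Defs
begin


lemma one_minus_cos_le: "1 - cos (b::real) \<le> b\<^sup>2 / 2"
proof -
  have "cos b = cos (2 * (b/2))" by simp
  also have "\<dots> = 1 - 2 * (sin (b/2))\<^sup>2" by (rule cos_double_sin)
  finally have e: "1 - cos b = 2 * (sin (b/2))\<^sup>2" by simp
  have "\<bar>sin (b/2)\<bar> \<le> \<bar>b/2\<bar>" by (rule abs_sin_x_le_abs_x)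
  then have "(sin (b/2))\<^sup>2 \<le> (b/2)\<^sup>2"
    by (metis abs_ge_zero power2_abs power_mono)
  then show ?thesis using e by (simp add: power_divide)
qed

lemma re_one_minus_exp_le:
  assumes "(a::real) \<ge> 0"
  shows "1 - exp (-a) * cos b \<le> a + b\<^sup>2 / 2"
proof -
  have "1 - exp (-a) \<le> a" using exp_ge_add_one_self[of "-a"] by simp
  moreover have "exp (-a) * (1 - cos b) \<le> 1 - cos b"
    using assms by (intro mult_left_le_one_le) (auto simp: cos_le_one)
  ultimately show ?thesis using one_minus_cos_le[of b] by (simp add: algebra_simps)
qed

lemma s_ln_sq_le:
  assumes "0 < (s::real)" "s \<le> 2"
  shows "s * (ln s)\<^sup>2 \<le> 4"
proof (cases "s \<le> 1")
  case True
  have "ln (1 / sqrt s) \<le> 1 / sqrt s - 1" using assms by (intro ln_le_minus_one) auto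
  moreover have "ln (1 / sqrt s) = - ln s / 2"
    using assms by (simp add: ln_div ln_sqrt)
  ultimately have h: "- ln s \<le> 2 / sqrt s" by (simp add: field_simps)
  have "ln s \<le> 0" using True assms by simp
  then have "(ln s)\<^sup>2 \<le> (2 / sqrt s)\<^sup>2"
    using h by (metis abs_of_nonpos neg_0_le_iff_le order.trans power2_abs power_mono abs_ge_zero)
  also have "\<dots> = 4 / s" using assms by (simp add: power_divide)
  finally have "(ln s)\<^sup>2 \<le> 4 / s" .
  then have "s * (ln s)\<^sup>2 \<le> s * (4 / s)" using assms by (intro mult_left_mono) auto
  then show ?thesis using assms by simp
next
  case False
  then have "0 \<le> ln s" "ln s \<le> s - 1" using assms by (auto intro: ln_le_minus_one)
  then have "(ln s)\<^sup>2 \<le> 1" using assms by (simp add: power_le_one)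
  then have "s * (ln s)\<^sup>2 \<le> 2 * 1" using assms by (intro mult_mono) auto
  then show ?thesis by simp
qed



lemma stable_re_bound:
  fixes \<alpha> kr u t :: real
  assumes a1: "1 \<le> \<alpha>" and a2: "\<alpha> < 2" and kr: "1 \<le> kr" and u: "0 < u" "u \<le> 2" and t: "\<bar>t\<bar> \<le> u"
  shows "Re (1 - stable_cf \<alpha> (kr powr (-1/\<alpha>)) 1 0 t) \<le> (3 + 2 * (tan (pi*\<alpha>/2))\<^sup>2) * u powr \<alpha> / kr"
proof (cases "\<alpha> = 1")
  case True
  define p where "p = \<bar>t\<bar> / kr"
  define q where "q = (2/pi) * sgn t * ln \<bar>t\<bar>"
  have sig: "kr powr (-1/\<alpha>) = 1 / kr" using True kr by (simp add: powr_minus_divide)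
  have cf: "stable_cf \<alpha> (kr powr (-1/\<alpha>)) 1 0 t = exp (- complex_of_real p * (1 + \<i> * complex_of_real q))"
    unfolding stable_cf_def using True sig by (simp add: p_def q_def)
  have "Re (1 - stable_cf \<alpha> (kr powr (-1/\<alpha>)) 1 0 t) = 1 - exp (-p) * cos (p*q)"
    unfolding cf by (simp add: Re_exp)
  also have "\<dots> \<le> p + (p*q)\<^sup>2/2" using kr by (intro re_one_minus_exp_le) (simp add: p_def)
  finally have R: "Re (1 - stable_cf \<alpha> (kr powr (-1/\<alpha>)) 1 0 t) \<le> p + (p*q)\<^sup>2/2" .
  have P: "p \<le> u / kr" using kr t by (simp add: p_def divide_right_mono)
  have Q: "(p*q)\<^sup>2 \<le> 4 * u / kr"
  proof (cases "t = 0")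
    case True then show ?thesis using u kr by (simp add: p_def)
  next
    case False
    have sq: "(sgn t)\<^sup>2 = 1" using False by (simp add: sgn_if)
    have "(p*q)\<^sup>2 = (\<bar>t\<bar>/kr)\<^sup>2 * ((2/pi)\<^sup>2 * (sgn t)\<^sup>2 * (ln \<bar>t\<bar>)\<^sup>2)"
      unfolding p_def q_def by (simp only: power_mult_distrib)
    also have "\<dots> = (4/pi\<^sup>2) * (\<bar>t\<bar> * (\<bar>t\<bar> * (ln \<bar>t\<bar>)\<^sup>2)) / kr\<^sup>2"
    proof -
      have tt: "\<bar>t\<bar> * (\<bar>t\<bar> * x) = t * t * x" for x by (cases "t \<ge> 0") auto
      show ?thesis unfolding sq tt by (simp add: power_divide power2_eq_square mult_ac)
    qed
    also have "\<dots> \<le> 1 * (\<bar>t\<bar> * 4) / kr\<^sup>2"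
    proof -
      have X: "\<bar>t\<bar> * (ln \<bar>t\<bar>)\<^sup>2 \<le> 4" using False t u by (intro s_ln_sq_le) auto
      have "3*3 \<le> pi*pi" using pi_gt3 by (intro mult_mono) auto
      then have "4 \<le> pi\<^sup>2" by (simp add: power2_eq_square)
      then have Y: "4/pi\<^sup>2 \<le> 1" by simp
      have "(4/pi\<^sup>2) * (\<bar>t\<bar> * (\<bar>t\<bar> * (ln \<bar>t\<bar>)\<^sup>2)) \<le> 1 * (\<bar>t\<bar> * 4)"
        using X Y by (intro mult_mono) auto
      then show ?thesis by (intro divide_right_mono) auto
    qed
    also have "\<dots> \<le> 4 * u / kr\<^sup>2" using t kr by (intro divide_right_mono) auto
    also have "\<dots> \<le> 4 * u / kr" using kr u by (intro divide_left_mono) (auto simp: power2_eq_square)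
    finally show ?thesis .
  qed
  have "Re (1 - stable_cf \<alpha> (kr powr (-1/\<alpha>)) 1 0 t) \<le> 3 * u / kr" using R P Q by (simp add: field_simps)
  also have "\<dots> \<le> (3 + 2 * (tan (pi*\<alpha>/2))\<^sup>2) * u powr \<alpha> / kr"
    using True u kr by (intro divide_right_mono mult_right_mono) auto
  finally show ?thesis .
next
  case False
  define p where "p = \<bar>t\<bar> powr \<alpha> / kr"
  define q where "q = sgn t * tan (pi * \<alpha> / 2)"
  have sig: "(kr powr (-1/\<alpha>)) powr \<alpha> = 1 / kr"
  proof -
    have "(kr powr (-1/\<alpha>)) powr \<alpha> = kr powr ((-1/\<alpha>) * \<alpha>)" by (rule powr_powr)
    also have "(-1/\<alpha>) * \<alpha> = - 1" using a1 by simp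
    also have "kr powr (- 1) = 1 / kr powr 1" by (rule powr_minus_divide)
    finally show ?thesis using kr by simp
  qed
  have cf: "stable_cf \<alpha> (kr powr (-1/\<alpha>)) 1 0 t = exp (- complex_of_real p * (1 - \<i> * complex_of_real q))"
    unfolding stable_cf_def using False sig by (simp add: p_def q_def)
  have "Re (1 - stable_cf \<alpha> (kr powr (-1/\<alpha>)) 1 0 t) = 1 - exp (-p) * cos (p*q)"
    unfolding cf by (simp add: Re_exp)
  also have "\<dots> \<le> p + (p*q)\<^sup>2/2" using kr by (intro re_one_minus_exp_le) (simp add: p_def)
  finally have R: "Re (1 - stable_cf \<alpha> (kr powr (-1/\<alpha>)) 1 0 t) \<le> p + (p*q)\<^sup>2/2" .
  have pu: "p \<le> u powr \<alpha> / kr" using kr t a1 by (simp add: p_def divide_right_mono powr_mono2)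
  have Q: "(p*q)\<^sup>2 \<le> 4 * (tan (pi*\<alpha>/2))\<^sup>2 * u powr \<alpha> / kr"
  proof -
    have q2: "q\<^sup>2 \<le> (tan (pi*\<alpha>/2))\<^sup>2" by (simp add: q_def power_mult_distrib sgn_if)
    have p0: "0 \<le> p" using kr by (simp add: p_def)
    have "u powr \<alpha> \<le> 2 powr \<alpha>" using u a1 by (intro powr_mono2) auto
    also have "\<dots> \<le> 2 powr 2" using a2 by (intro powr_mono) auto
    finally have u4: "u powr \<alpha> \<le> 4" by simp
    have "p\<^sup>2 \<le> (u powr \<alpha> / kr)\<^sup>2" using p0 pu by (intro power_mono) auto
    also have "\<dots> = u powr \<alpha> * (u powr \<alpha>) / kr\<^sup>2" by (simp add: power2_eq_square)
    also have "\<dots> \<le> u powr \<alpha> * 4 / kr\<^sup>2" using u4 kr by (intro divide_right_mono mult_left_mono) auto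
    also have "\<dots> \<le> u powr \<alpha> * 4 / kr" using kr u by (intro divide_left_mono) (auto simp: power2_eq_square)
    finally have p2: "p\<^sup>2 \<le> 4 * u powr \<alpha> / kr" by (simp add: mult.commute)
    have "(p*q)\<^sup>2 = p\<^sup>2 * q\<^sup>2" by (simp add: power_mult_distrib)
    also have "\<dots> \<le> (4 * u powr \<alpha> / kr) * (tan (pi*\<alpha>/2))\<^sup>2"
      using p2 q2 kr by (intro mult_mono) auto
    finally show ?thesis by (simp add: field_simps)
  qed
  define A where "A = u powr \<alpha> / kr"
  define T2 where "T2 = (tan (pi*\<alpha>/2))\<^sup>2"
  have A0: "0 \<le> A" using kr by (simp add: A_def)
  have T20: "0 \<le> T2" by (simp add: T2_def)
  have e1: "4 * (tan (pi*\<alpha>/2))\<^sup>2 * u powr \<alpha> / kr = 4 * (T2 * A)" by (simp add: A_def T2_def)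
  have e2: "(3 + 2 * (tan (pi*\<alpha>/2))\<^sup>2) * u powr \<alpha> / kr = 3 * A + 2 * (T2 * A)"
    by (simp add: A_def T2_def algebra_simps add_divide_distrib)
  have "0 \<le> T2 * A" using A0 T20 by simp
  then show ?thesis unfolding e2 using R pu Q A0 unfolding e1 A_def[symmetric] by linarith
qed



lemma (in real_distribution) main_bound:
  assumes "u > 0"
  shows "u * measure M {x. abs x \<ge> 2 / u} \<le> Re (CLBINT t:{-u..u}. 1 - char M t)"
proof -
  have *: "\<And>u x. u > 0 \<Longrightarrow> x \<noteq> 0 \<Longrightarrow> (CLBINT t:{-u..u}. 1 - iexp (t * x)) =
      2 * (u  - sin (u * x) / x)"
  proof -
    fix u :: real and x :: real
    assume "u > 0" and "x \<noteq> 0"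
    hence "(CLBINT t:{-u..u}. 1 - iexp (t * x)) = (CLBINT t=-u..u. 1 - iexp (t * x))"
      by (subst interval_integral_Icc, auto)
    also have "\<dots> = (CLBINT t=-u..ereal 0. 1 - iexp (t * x)) + (CLBINT t= ereal 0..u. 1 - iexp (t * x))"
      using \<open>u > 0\<close>
      by (subst interval_integral_sum; force simp add: interval_integrable_isCont)
    also have "\<dots> = (CLBINT t=ereal 0..u. 1 - iexp (t * -x)) + (CLBINT t=ereal 0..u. 1 - iexp (t * x))"
      by (subst interval_integral_reflect, auto)
    also have "... = CLBINT xa=ereal 0..ereal u. 1 - iexp (xa * - x) + (1 - iexp (xa * x))"
      by (subst interval_lebesgue_integral_add (2) [symmetric]) (auto simp: interval_integrable_isCont)
    also have "\<dots> = (LBINT t=ereal 0..u. 2 - 2 * cos (t * x))"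
      unfolding exp_Euler cos_of_real by (simp flip: interval_lebesgue_integral_of_real)
    also have "\<dots> = 2 * u - 2 * sin (u * x) / x"
      by (subst interval_lebesgue_integral_diff)
         (auto intro!: interval_integrable_isCont
               simp: interval_lebesgue_integral_of_real integral_cos [OF \<open>x \<noteq> 0\<close>] mult.commute[of _ x])
    finally show "(CLBINT t:{-u..u}. 1 - iexp (t * x)) = 2 * (u  - sin (u * x) / x)"
      by (simp add: field_simps)
  qed
  interpret P: pair_sigma_finite M lborel ..
  have Mn1 [simp]: "measure M UNIV = 1" by (metis prob_space space_eq_univ)
  have Mn2 [simp]: "\<And>x. complex_integrable M (\<lambda>t. exp (\<i> * complex_of_real (x * t)))"
    by (rule integrable_const_bound [where B = 1], auto)
  have Mn3: "set_integrable (M \<Otimes>\<^sub>M lborel) (UNIV \<times> {- u..u}) (\<lambda>a. 1 - exp (\<i> * complex_of_real (snd a * fst a)))"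
    using \<open>0 < u\<close>
    unfolding set_integrable_def
    by (intro integrableI_bounded_set_indicator [where B="2"])
       (auto simp: lborel.emeasure_pair_measure_Times ennreal_mult_less_top not_less top_unique
             split: split_indicator
             intro!: order_trans [OF norm_triangle_ineq4])
  have "(CLBINT t:{-u..u}. 1 - char M t) =
      (CLBINT t:{-u..u}. (CLINT x | M. 1 - iexp (t * x)))"
    unfolding char_def by (rule set_lebesgue_integral_cong, auto simp del: of_real_mult)
  also have "\<dots> = (CLBINT t. (CLINT x | M. indicator {-u..u} t *\<^sub>R (1 - iexp (t * x))))"
    unfolding set_lebesgue_integral_def
    by (rule Bochner_Integration.integral_cong) (auto split: split_indicator)
  also have "\<dots> = (CLINT x | M. (CLBINT t:{-u..u}. 1 - iexp (t * x)))"
    using Mn3 by (subst P.Fubini_integral) (auto simp: indicator_times split_beta' set_integrable_def set_lebesgue_integral_def)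
  also have "\<dots> = (CLINT x | M. (if x = 0 then 0 else 2 * (u  - sin (u * x) / x)))"
    using \<open>u > 0\<close> by (intro Bochner_Integration.integral_cong, auto simp add: * simp del: of_real_mult)
  also have "\<dots> = (LINT x | M. (if x = 0 then 0 else 2 * (u  - sin (u * x) / x)))"
    by (rule integral_complex_of_real)
  finally have "Re (CLBINT t:{-u..u}. 1 - char M t) =
     (LINT x | M. (if x = 0 then 0 else 2 * (u  - sin (u * x) / x)))" by simp
  also have "\<dots> \<ge> (LINT x : {x. abs x \<ge> 2 / u} | M. u)"
  proof -
    have "complex_integrable M (\<lambda>x. CLBINT t:{-u..u}. 1 - iexp (snd (x, t) * fst (x, t)))"
      using Mn3 unfolding set_integrable_def set_lebesgue_integral_def
      by (intro P.integrable_fst) (simp add: indicator_times split_beta')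
    hence "complex_integrable M (\<lambda>x. if x = 0 then 0 else 2 * (u  - sin (u * x) / x))"
      using \<open>u > 0\<close>
      unfolding set_integrable_def
      by (subst Bochner_Integration.integrable_cong) (auto simp add: * simp del: of_real_mult)
    hence **: "integrable M (\<lambda>x. if x = 0 then 0 else 2 * (u  - sin (u * x) / x))"
      unfolding complex_of_real_integrable_eq .
    have "2 * sin x \<le> x" if "2 \<le> x" for x :: real
      by (rule order_trans[OF _ \<open>2 \<le> x\<close>]) auto
    moreover have "x \<le> 2 * sin x" if "x \<le> - 2" for x :: real
      by (rule order_trans[OF \<open>x \<le> - 2\<close>]) auto
    moreover have "x < 0 \<Longrightarrow> x \<le> sin x" for x :: real
      using sin_x_le_x[of "-x"] by simp
    ultimately show ?thesis
      using \<open>u > 0\<close> unfolding set_lebesgue_integral_def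
      by (intro integral_mono [OF _ **])
         (auto simp: divide_simps sin_x_le_x mult.commute[of u] mult_neg_pos top_unique less_top[symmetric]
               split: split_indicator)
  qed
  also (xtrans) have "(LINT x : {x. abs x \<ge> 2 / u} | M. u) = u * measure M {x. abs x \<ge> 2 / u}"
    unfolding set_lebesgue_integral_def
    by (simp add: emeasure_eq_measure)
  finally show ?thesis .
qed

lemma (in real_distribution) re_char_integral_le:
  assumes u: "u > 0" and B: "\<And>t. \<bar>t\<bar> \<le> u \<Longrightarrow> Re (1 - char M t) \<le> B"
  shows "Re (CLBINT t:{-u..u}. 1 - char M t) \<le> 2 * u * B"
proof -
  have ci: "complex_integrable lborel (\<lambda>t. indicator {-u..u} t *\<^sub>R (1 - char M t))"
    by (intro integrableI_bounded_set_indicator[where B=2])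
       (auto simp: emeasure_lborel_Icc_eq intro!: order_trans [OF norm_triangle_ineq4] cmod_char_le_1)
  have "Re (CLBINT t:{-u..u}. 1 - char M t) = (LINT t|lborel. Re (indicator {-u..u} t *\<^sub>R (1 - char M t)))"
    unfolding set_lebesgue_integral_def using integral_Re[OF ci] by simp
  also have "\<dots> \<le> (LINT t|lborel. indicator {-u..u} t * B)"
  proof (rule integral_mono)
    show "integrable lborel (\<lambda>t. Re (indicator {-u..u} t *\<^sub>R (1 - char M t)))"
      using ci by (rule integrable_Re)
    show "integrable lborel (\<lambda>t. indicat_real {-u..u} t * B)"
      by (intro integrable_mult_left) (simp add: emeasure_lborel_Icc_eq)
    show "Re (indicator {-u..u} t *\<^sub>R (1 - char M t)) \<le> indicat_real {-u..u} t * B" for t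
      using B[of t] by (auto split: split_indicator)
  qed
  also have "\<dots> = 2 * u * B" using u by (simp add: measure_lborel_Icc)
  finally show ?thesis .
qed

lemma tail_bound:
  fixes \<alpha> kr u :: real and N :: "real measure"
  assumes N: "real_distribution N" and ch: "char N = stable_cf \<alpha> (kr powr (-1/\<alpha>)) 1 0"
    and a1: "1 \<le> \<alpha>" and a2: "\<alpha> < 2" and kr: "1 \<le> kr" and u: "0 < u" "u \<le> 2"
  shows "measure N {x. \<bar>x\<bar> \<ge> 2/u} \<le> 2 * ((3 + 2 * (tan (pi*\<alpha>/2))\<^sup>2) * u powr \<alpha> / kr)"
proof -
  interpret real_distribution N by fact
  define B where "B = (3 + 2 * (tan (pi*\<alpha>/2))\<^sup>2) * u powr \<alpha> / kr"
  have "u * measure N {x. \<bar>x\<bar> \<ge> 2/u} \<le> Re (CLBINT t:{-u..u}. 1 - char N t)"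
    using u(1) by (rule main_bound)
  also have "\<dots> \<le> 2 * u * B"
  proof (rule re_char_integral_le[OF u(1)])
    fix t :: real assume "\<bar>t\<bar> \<le> u"
    then show "Re (1 - char N t) \<le> B" unfolding ch B_def using stable_re_bound[OF a1 a2 kr u] by simp
  qed
  finally have "u * measure N {x. \<bar>x\<bar> \<ge> 2/u} \<le> u * (2 * B)" by simp
  then have "measure N {x. \<bar>x\<bar> \<ge> 2/u} \<le> 2 * B" using u by simp
  then show ?thesis by (simp only: B_def)
qed



lemma Zdisc_measurable [measurable]: "Zdisc k \<in> borel_measurable borel"
  unfolding Zdisc_def Ytrunc_def by measurable

lemma Zdisc_facts:
  assumes "Zdisc k x \<noteq> 0"
  shows "2 ^ k \<le> x" "x \<le> 4 ^ k" "0 \<le> Zdisc k x" "Zdisc k x \<le> x"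
proof -
  define S where "S = {8 ^ k .. 16 ^ k :: nat}"
  define y where "y = Ytrunc k x"
  define I where "I j = {real j / 4 ^ k ..< (real j + 1) / 4 ^ k}" for j :: nat
  have Z: "Zdisc k x = (\<Sum>j\<in>S. real j / 4 ^ k * indicator (I j) y)"
    by (simp add: Zdisc_def S_def y_def I_def)
  obtain j0 where j0: "j0 \<in> S" "real j0 / 4 ^ k * indicator (I j0) y \<noteq> 0"
    using assms unfolding Z by (rule sum.not_neutral_contains_not_neutral)
  have yI: "y \<in> I j0" using j0(2) by (cases "y \<in> I j0") auto
  have "(1::nat) \<le> 8 ^ k" using one_le_power[of "8::nat" k] by simp
  then have "1 \<le> j0" using j0(1) unfolding S_def atLeastAtMost_iff by linarith
  then have "0 < y" using yI by (auto simp: I_def intro: less_le_trans[of 0 "real j0 / 4^k"])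
  then have xin: "x \<in> {2 ^ k .. 4 ^ k}"
    by (cases "x \<in> {2 ^ k .. 4 ^ k}") (auto simp: y_def Ytrunc_def simp del: atLeastAtMost_iff)
  then have yx: "y = x" by (simp add: y_def Ytrunc_def)
  show "2 ^ k \<le> x" "x \<le> 4 ^ k" using xin by auto
  have uniq: "j = j0" if "j \<in> S" "y \<in> I j" for j
  proof -
    have "real j / 4 ^ k < (real j0 + 1) / 4 ^ k" "real j0 / 4 ^ k < (real j + 1) / 4 ^ k"
      using that yI by (auto simp: I_def)
    then have "real j < real j0 + 1" "real j0 < real j + 1" by (auto simp: divide_less_cancel)
    then show ?thesis by linarith
  qed
  have "Zdisc k x = (\<Sum>j\<in>S. if j = j0 then real j / 4 ^ k * indicator (I j) y else 0)"
    unfolding Z by (rule sum.cong) (auto split: split_indicator dest: uniq)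
  also have "\<dots> = real j0 / 4 ^ k" using j0(1) yI by (simp add: S_def sum.delta)
  finally have Zj: "Zdisc k x = real j0 / 4 ^ k" .
  then show "0 \<le> Zdisc k x" by simp
  show "Zdisc k x \<le> x" using Zj yI yx by (simp add: I_def)
qed

lemma Zdisc_nonneg: "0 \<le> Zdisc k x"
  using Zdisc_facts(3)[of k x] by (cases "Zdisc k x = 0") auto

lemma Zdisc_le: "Zdisc k x \<le> 4 ^ k"
  using Zdisc_facts(2,4)[of k x] by (cases "Zdisc k x = 0") auto

lemma sq_le_dyadic_sum:
  fixes x :: real
  assumes "1 \<le> x" "x \<le> 2 ^ N"
  shows "x\<^sup>2 \<le> (\<Sum>m\<le>N. 4 ^ (m+1) * indicator {y. 2 ^ m \<le> \<bar>y\<bar>} x)"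
  using assms
proof (induction N)
  case 0 then show ?case by (simp add: power2_eq_square)
next
  case (Suc N)
  have nn: "\<And>m. 0 \<le> (4::real) ^ (m+1) * indicator {y. 2 ^ m \<le> \<bar>y\<bar>} x" by simp
  show ?case
  proof (cases "x \<le> 2 ^ N")
    case True
    then have "x\<^sup>2 \<le> (\<Sum>m\<le>N. 4 ^ (m+1) * indicator {y. 2 ^ m \<le> \<bar>y\<bar>} x)" using Suc by simp
    also have "\<dots> \<le> (\<Sum>m\<le>Suc N. 4 ^ (m+1) * indicator {y. 2 ^ m \<le> \<bar>y\<bar>} x)"
      by (intro sum_mono2) (auto simp: nn)
    finally show ?thesis .
  next
    case False
    then have "2 ^ N \<le> \<bar>x\<bar>" by simp
    then have t: "4 ^ (N+1) * indicator {y. 2 ^ N \<le> \<bar>y\<bar>} x = (4::real) ^ (N+1)" by simp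
    have "x\<^sup>2 \<le> (2 ^ Suc N)\<^sup>2" using Suc.prems by (intro power_mono) auto
    also have "\<dots> = (4::real) ^ (N+1)" by (simp add: power2_eq_square flip: power_mult_distrib)
    also have "\<dots> = 4 ^ (N+1) * indicator {y. 2 ^ N \<le> \<bar>y\<bar>} x" using t by simp
    also have "\<dots> \<le> (\<Sum>m\<le>Suc N. 4 ^ (m+1) * indicator {y. 2 ^ m \<le> \<bar>y\<bar>} x)"
      by (rule member_le_sum[where f="\<lambda>m. 4 ^ (m+1) * indicator {y. 2 ^ m \<le> \<bar>y\<bar>} x"]) (auto simp: nn)
    finally show ?thesis .
  qed
qed



definition Kc :: "real \<Rightarrow> real" where "Kc \<alpha> = 3 + 2 * (tan (pi*\<alpha>/2))\<^sup>2"
definition rr :: "real \<Rightarrow> real" where "rr \<alpha> = 2 powr (2 - \<alpha>)"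
definition C1 :: "real \<Rightarrow> real" where "C1 \<alpha> = 32 * Kc \<alpha> * rr \<alpha> / (rr \<alpha> - 1)"

lemma rr_gt1: "\<alpha> < 2 \<Longrightarrow> 1 < rr \<alpha>"
  unfolding rr_def by simp

lemma Kc_pos: "0 < Kc \<alpha>" unfolding Kc_def by (simp add: add_pos_nonneg)

lemma C1_pos: "\<alpha> < 2 \<Longrightarrow> 0 < C1 \<alpha>"
  using rr_gt1[of \<alpha>] Kc_pos[of \<alpha>] unfolding C1_def by simp

lemma Zdisc_sq_le: "(Zdisc k x)\<^sup>2 \<le> 16 ^ k"
proof -
  have "(Zdisc k x)\<^sup>2 \<le> (4 ^ k)\<^sup>2" by (intro power_mono Zdisc_le Zdisc_nonneg)
  also have "(4 ^ k)\<^sup>2 = (16::real) ^ k" by (simp flip: power_mult power_mult_distrib add: power2_eq_square)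
  finally show ?thesis .
qed

lemma term_bound:
  fixes \<alpha> kr :: real and m :: nat
  assumes a1: "1 \<le> \<alpha>" "\<alpha> < 2" and kr: "1 \<le> kr"
  shows "4 ^ (m+1) * (2 * (Kc \<alpha> * (2 / 2 ^ m) powr \<alpha> / kr)) \<le> 32 * Kc \<alpha> * rr \<alpha> ^ m / kr"
proof -
  have e1: "(2::real) / 2 ^ m = 2 powr (1 - real m)"
    by (simp add: powr_diff powr_realpow)
  have e2: "(4::real) ^ (m+1) = 2 powr (2 * real (m+1))"
  proof -
    have "(4::real) ^ (m+1) = (2 powr 2) ^ (m+1)" by simp
    also have "\<dots> = 2 powr (real (m+1) * 2)" by (rule powr_power) simp
    finally show ?thesis by (simp add: mult.commute)
  qed
  have e3: "rr \<alpha> ^ m = 2 powr (real m * (2 - \<alpha>))" unfolding rr_def by (rule powr_power) simp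
  have "4 ^ (m+1) * (2 / 2 ^ m) powr \<alpha> = 2 powr (2 * real (m+1)) * 2 powr ((1 - real m) * \<alpha>)"
    unfolding e1 e2 by (simp add: powr_powr)
  also have "\<dots> = 2 powr (2 + \<alpha>) * 2 powr (real m * (2 - \<alpha>))"
    by (simp add: powr_add[symmetric] algebra_simps)
  also have "\<dots> \<le> 2 powr 4 * 2 powr (real m * (2 - \<alpha>))"
    using a1 by (intro mult_right_mono powr_mono) auto
  finally have "4 ^ (m+1) * (2 / 2 ^ m) powr \<alpha> \<le> 16 * rr \<alpha> ^ m" unfolding e3 by simp
  then have "2 * Kc \<alpha> * (4 ^ (m+1) * (2 / 2 ^ m) powr \<alpha>) / kr \<le> 2 * Kc \<alpha> * (16 * rr \<alpha> ^ m) / kr"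
    using kr Kc_pos[of \<alpha>] by (intro divide_right_mono mult_left_mono) auto
  then show ?thesis by (simp add: algebra_simps)
qed

lemma moment_bound:
  fixes \<alpha> :: real and N :: "real measure" and k :: nat
  assumes N: "real_distribution N" and ch: "char N = stable_cf \<alpha> (real k powr (-1/\<alpha>)) 1 0"
    and a1: "1 \<le> \<alpha>" and a2: "\<alpha> < 2" and k: "1 \<le> k"
  shows "(\<integral>x. (Zdisc k x)\<^sup>2 \<partial>N) \<le> C1 \<alpha> * 4 powr ((2 - \<alpha>) * real k) / real k"
proof -
  interpret real_distribution N by fact
  have kr: "1 \<le> real k" using k by simp
  define F :: "real \<Rightarrow> real" where "F x = (\<Sum>m\<le>2*k. 4 ^ (m+1) * indicator {y::real. 2 ^ m \<le> \<bar>y\<bar>} x)" for x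
  have ptw: "(Zdisc k x)\<^sup>2 \<le> F x" for x
  proof (cases "Zdisc k x = 0")
    case True then show ?thesis by (simp add: F_def sum_nonneg)
  next
    case False
    note f = Zdisc_facts[OF False]
    have "(Zdisc k x)\<^sup>2 \<le> x\<^sup>2" using f Zdisc_nonneg[of k x] by (intro power_mono) auto
    also have "\<dots> \<le> F x" unfolding F_def
    proof (rule sq_le_dyadic_sum)
      show "1 \<le> x" using f(1) one_le_power[of "2::real" k] by linarith
      have "(4::real) ^ k = 2 ^ (2*k)" by (simp add: power_mult)
      then show "x \<le> 2 ^ (2*k)" using f(2) by simp
    qed
    finally show ?thesis .
  qed
  have setsm: "{y::real. 2 ^ m \<le> \<bar>y\<bar>} \<in> sets N" for m
  proof -
    have "{y::real. 2 ^ m \<le> \<bar>y\<bar>} \<in> sets borel" by measurable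
    then show ?thesis by (simp add: events_eq_borel)
  qed
  have intI: "integrable N (indicat_real {y::real. 2 ^ m \<le> \<bar>y\<bar>})" for m
    using setsm by (intro integrable_real_indicator) (auto simp: emeasure_eq_measure)
  have intF: "integrable N F" unfolding F_def
    by (rule Bochner_Integration.integrable_sum) (rule integrable_mult_right[OF intI])
  have intZ: "integrable N (\<lambda>x. (Zdisc k x)\<^sup>2)"
    by (intro integrable_const_bound[where B="16 ^ k"]) (auto simp: Zdisc_sq_le)
  have "(\<integral>x. (Zdisc k x)\<^sup>2 \<partial>N) \<le> (\<integral>x. F x \<partial>N)"
    using intZ intF ptw by (intro integral_mono) auto
  also have "(\<integral>x. F x \<partial>N) = (\<Sum>m\<le>2*k. 4 ^ (m+1) * measure N {y. 2 ^ m \<le> \<bar>y\<bar>})"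
    unfolding F_def by (subst Bochner_Integration.integral_sum) (auto intro!: intI simp: space_eq_univ)
  also have "\<dots> \<le> (\<Sum>m\<le>2*k. 32 * Kc \<alpha> * rr \<alpha> ^ m / real k)"
  proof (rule sum_mono)
    fix m assume "m \<in> {..2*k}"
    have u: "0 < 2 / (2::real) ^ m" "2 / (2::real) ^ m \<le> 2"
      using one_le_power[of "2::real" m] by (auto simp: divide_le_eq)
    have "measure N {y. 2 ^ m \<le> \<bar>y\<bar>} = measure N {y. 2 / (2 / 2 ^ m) \<le> \<bar>y\<bar>}" by simp
    also have "\<dots> \<le> 2 * ((3 + 2 * (tan (pi*\<alpha>/2))\<^sup>2) * (2 / 2 ^ m) powr \<alpha> / real k)"
      by (rule tail_bound[OF N ch a1 a2 kr u])
    finally have "4 ^ (m+1) * measure N {y. 2 ^ m \<le> \<bar>y\<bar>} \<le> 4 ^ (m+1) * (2 * (Kc \<alpha> * (2 / 2 ^ m) powr \<alpha> / real k))"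
      unfolding Kc_def by (intro mult_left_mono) auto
    also have "\<dots> \<le> 32 * Kc \<alpha> * rr \<alpha> ^ m / real k" by (rule term_bound[OF a1 a2 kr])
    finally show "4 ^ (m+1) * measure N {y. 2 ^ m \<le> \<bar>y\<bar>} \<le> 32 * Kc \<alpha> * rr \<alpha> ^ m / real k" .
  qed
  finally have S1: "(\<integral>x. (Zdisc k x)\<^sup>2 \<partial>N) \<le> (\<Sum>m\<le>2*k. 32 * Kc \<alpha> * rr \<alpha> ^ m / real k)" .
  have S2: "(\<Sum>m\<le>2*k. 32 * Kc \<alpha> * rr \<alpha> ^ m / real k) = 32 * Kc \<alpha> / real k * (\<Sum>m<2*k+1. rr \<alpha> ^ m)"
    by (simp add: sum_distrib_left lessThan_Suc_atMost)
  have "(\<Sum>m<2*k+1. rr \<alpha> ^ m) = (rr \<alpha> ^ (2*k+1) - 1) / (rr \<alpha> - 1)"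
    using rr_gt1[OF a2] by (intro geometric_sum) simp
  also have "\<dots> \<le> rr \<alpha> ^ (2*k+1) / (rr \<alpha> - 1)"
    using rr_gt1[OF a2] by (intro divide_right_mono) auto
  also have "rr \<alpha> ^ (2*k+1) = rr \<alpha> * 4 powr ((2 - \<alpha>) * real k)"
  proof -
    have "rr \<alpha> ^ (2*k) = 2 powr (real (2*k) * (2 - \<alpha>))" unfolding rr_def by (rule powr_power) simp
    also have "\<dots> = 2 powr (2 * ((2 - \<alpha>) * real k))" by (simp add: algebra_simps)
    also have "\<dots> = (2 powr 2) powr ((2 - \<alpha>) * real k)" by (rule powr_powr[symmetric])
    also have "(2::real) powr 2 = 4" by simp
    finally have "rr \<alpha> ^ (2*k) = 4 powr ((2 - \<alpha>) * real k)" .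
    then show ?thesis by (simp add: power_add mult.commute)
  qed
  finally have S3: "(\<Sum>m<2*k+1. rr \<alpha> ^ m) \<le> rr \<alpha> * 4 powr ((2 - \<alpha>) * real k) / (rr \<alpha> - 1)" .
  have "(\<integral>x. (Zdisc k x)\<^sup>2 \<partial>N) \<le> 32 * Kc \<alpha> / real k * (rr \<alpha> * 4 powr ((2 - \<alpha>) * real k) / (rr \<alpha> - 1))"
    using S1 S3 Kc_pos[of \<alpha>] kr unfolding S2 by (smt (verit) mult_left_mono divide_nonneg_nonneg)
  then show ?thesis by (simp add: C1_def field_simps)
qed



lemma mpt_funpow:
  assumes "mpt M T"
  shows "(T ^^ n) \<in> M \<rightarrow>\<^sub>M M" "distr M M (T ^^ n) = M"
proof -
  have T: "T \<in> M \<rightarrow>\<^sub>M M" and D: "distr M M T = M" using assms by (auto simp: mpt_def)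
  show m: "(T ^^ n) \<in> M \<rightarrow>\<^sub>M M" for n using T by (rule measurable_compose_n)
  show "distr M M (T ^^ n) = M"
  proof (induction n)
    case 0 then show ?case by (simp add: distr_id2)
  next
    case (Suc n)
    have "distr M M (T ^^ Suc n) = distr M M (T \<circ> (T ^^ n))" by simp
    also have "\<dots> = distr (distr M M (T ^^ n)) M T" using m T by (simp add: distr_distr)
    also have "\<dots> = M" using Suc D by simp
    finally show ?case .
  qed
qed

lemma integral_shift:
  fixes F :: "'a \<Rightarrow> real"
  assumes "mpt M T" and F: "F \<in> borel_measurable M"
  shows "(\<integral>x. F ((T ^^ n) x) \<partial>M) = (\<integral>x. F x \<partial>M)"
proof -
  have "(\<integral>x. F ((T ^^ n) x) \<partial>M) = integral\<^sup>L (distr M M (T ^^ n)) F"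
    using integral_distr[OF mpt_funpow(1)[OF assms(1)] F] by simp
  then show ?thesis using mpt_funpow(2)[OF assms(1)] by simp
qed

lemma integrable_shift:
  fixes F :: "'a \<Rightarrow> real"
  assumes "mpt M T" and F: "F \<in> borel_measurable M"
  shows "integrable M (\<lambda>x. F ((T ^^ n) x)) \<longleftrightarrow> integrable M F"
proof -
  have "integrable M (\<lambda>x. F ((T ^^ n) x)) \<longleftrightarrow> integrable (distr M M (T ^^ n)) F"
    using integrable_distr_eq[OF mpt_funpow(1)[OF assms(1)] F] by simp
  then show ?thesis using mpt_funpow(2)[OF assms(1)] by simp
qed

lemma transfer:
  fixes \<Phi> :: "'a \<Rightarrow> 'i \<Rightarrow> real" and \<Psi> :: "'b \<Rightarrow> 'i \<Rightarrow> real" and G :: "('i \<Rightarrow> real) \<Rightarrow> real"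
  assumes eq: "distr M (PiM I (\<lambda>_. borel)) \<Phi> = distr P (PiM I (\<lambda>_. borel)) \<Psi>"
    and \<Phi>: "\<Phi> \<in> M \<rightarrow>\<^sub>M PiM I (\<lambda>_. borel)" and \<Psi>: "\<Psi> \<in> P \<rightarrow>\<^sub>M PiM I (\<lambda>_. borel)"
    and G: "G \<in> borel_measurable (PiM I (\<lambda>_. borel))"
  shows "(\<integral>x. G (\<Phi> x) \<partial>M) = (\<integral>w. G (\<Psi> w) \<partial>P)"
    "integrable M (\<lambda>x. G (\<Phi> x)) \<longleftrightarrow> integrable P (\<lambda>w. G (\<Psi> w))"
proof -
  have "(\<integral>x. G (\<Phi> x) \<partial>M) = integral\<^sup>L (distr M (PiM I (\<lambda>_. borel)) \<Phi>) G"
    using integral_distr[OF \<Phi> G] by simp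
  also have "\<dots> = integral\<^sup>L (distr P (PiM I (\<lambda>_. borel)) \<Psi>) G" by (simp add: eq)
  also have "\<dots> = (\<integral>w. G (\<Psi> w) \<partial>P)" using \<Psi> G by (simp add: integral_distr)
  finally show "(\<integral>x. G (\<Phi> x) \<partial>M) = (\<integral>w. G (\<Psi> w) \<partial>P)" .
  have "integrable M (\<lambda>x. G (\<Phi> x)) \<longleftrightarrow> integrable (distr M (PiM I (\<lambda>_. borel)) \<Phi>) G"
    using integrable_distr_eq[OF \<Phi> G] by simp
  also have "\<dots> \<longleftrightarrow> integrable (distr P (PiM I (\<lambda>_. borel)) \<Psi>) G" by (simp add: eq)
  also have "\<dots> \<longleftrightarrow> integrable P (\<lambda>w. G (\<Psi> w))" using \<Psi> G by (simp add: integrable_distr_eq)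
  finally show "integrable M (\<lambda>x. G (\<Phi> x)) \<longleftrightarrow> integrable P (\<lambda>w. G (\<Psi> w))" .
qed

lemma birkhoff_split:
  "birkhoff_sum T (l + m) h x = birkhoff_sum T l h x + birkhoff_sum T m h ((T ^^ l) x)"
proof -
  have "birkhoff_sum T (l + m) h x = (\<Sum>i<l. h ((T ^^ i) x)) + (\<Sum>i\<in>{l..<l+m}. h ((T ^^ i) x))"
    unfolding birkhoff_sum_def by (simp add: sum.atLeastLessThan_concat[symmetric] lessThan_atLeast0 )
  also have "(\<Sum>i\<in>{l..<l+m}. h ((T ^^ i) x)) = (\<Sum>i<m. h ((T ^^ (i + l)) x))"
    using sum.shift_bounds_nat_ivl[of "\<lambda>i. h ((T ^^ i) x)" 0 l m] by (simp add: lessThan_atLeast0 add.commute[of l])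
  also have "\<dots> = birkhoff_sum T m h ((T ^^ l) x)"
    unfolding birkhoff_sum_def by (simp add: funpow_add)
  finally show ?thesis unfolding birkhoff_sum_def by simp
qed



lemma telesc:
  fixes a :: "nat \<Rightarrow> real"
  assumes "d \<le> m"
  shows "(\<Sum>i<m. a i - a (i+d)) = (\<Sum>i<d. a i) - (\<Sum>i<d. a (i+m))"
  using assms
proof (induction m rule: nat_induct_at_least)
  case base then show ?case by (simp add: sum_subtractf)
next
  case (Suc m)
  have t: "(\<Sum>n<d. a (Suc n + m) - a (n + m)) = a (d + m) - a (0 + m)"
    by (rule sum_lessThan_telescope[where f="\<lambda>n. a (n + m)"])
  have "(\<Sum>i<d. a (i + Suc m)) = (\<Sum>i<d. a (i + m)) + (\<Sum>n<d. a (Suc n + m) - a (n + m))"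
    by (simp add: sum_subtractf)
  then show ?case using Suc t by (simp add: add.commute)
qed

lemma split_small:
  fixes a :: "nat \<Rightarrow> real"
  assumes "m \<le> d"
  shows "(\<Sum>i<m. a i - a (i+d)) = (\<Sum>i\<in>{..<m} \<union> {d..<d+m}. (if i < d then 1 else -1) * a i)"
proof -
  have disj: "{..<m} \<inter> {d..<d+m} = {}" using assms by auto
  have "(\<Sum>i\<in>{..<m} \<union> {d..<d+m}. (if i < d then 1 else -1) * a i) =
     (\<Sum>i<m. (if i < d then 1 else -1) * a i) + (\<Sum>i\<in>{d..<d+m}. (if i < d then 1 else -1) * a i)"
    by (rule sum.union_disjoint) (auto simp: disj)
  also have "(\<Sum>i<m. (if i < d then 1 else -1) * a i) = (\<Sum>i<m. a i)"
    using assms by (intro sum.cong) auto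
  also have "(\<Sum>i\<in>{d..<d+m}. (if i < d then 1 else -1) * a i) = (\<Sum>i\<in>{d..<d+m}. - a i)"
    by (intro sum.cong) auto
  also have "\<dots> = (\<Sum>i<m. - a (i + d))"
    using sum.shift_bounds_nat_ivl[of "\<lambda>i. - a i" 0 d m] by (simp add: lessThan_atLeast0 add.commute)
  finally show ?thesis by (simp add: sum_subtractf sum_negf)
qed

context
  fixes M :: "'a measure" and T :: "'a \<Rightarrow> 'a" and f :: "nat \<Rightarrow> 'a \<Rightarrow> real"
    and P :: "(nat \<Rightarrow> nat \<Rightarrow> real) measure" and X :: "nat \<Rightarrow> nat \<Rightarrow> (nat \<Rightarrow> nat \<Rightarrow> real) \<Rightarrow> real"
    and k :: nat
  assumes Mp: "prob_space M" and mpt: "mpt M T" and fm: "\<And>k. f k \<in> borel_measurable M"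
    and Pp: "prob_space P"
    and ind: "prob_space.indep_vars P (\<lambda>_. borel) (\<lambda>(k, m). X k m) {(k, m). 1 \<le> k \<and> 1 \<le> m}"
    and eq: "distr M (PiM adm_index (\<lambda>_. borel))
             (\<lambda>x. \<lambda>i \<in> adm_index. f (fst i) ((T ^^ snd i) x))
        = distr P (PiM adm_index (\<lambda>_. borel))
             (\<lambda>\<omega>. \<lambda>i \<in> adm_index. Zdisc (fst i) (X (fst i) (snd i + 1) \<omega>))"
    and k1: "1 \<le> k"
begin

lemma Tm: "T \<in> M \<rightarrow>\<^sub>M M" using mpt by (simp add: mpt_def)

lemma g_meas: "(\<lambda>x. f k ((T ^^ i) x)) \<in> borel_measurable M"
  using fm Tm by measurable

lemma X_meas: "1 \<le> k' \<Longrightarrow> 1 \<le> m \<Longrightarrow> X k' m \<in> borel_measurable P"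
  using ind unfolding prob_space.indep_vars_def2[OF Pp] by auto

lemma Phi_meas: "(\<lambda>x. \<lambda>i \<in> adm_index. f (fst i) ((T ^^ snd i) x)) \<in> M \<rightarrow>\<^sub>M PiM adm_index (\<lambda>_. borel)"
proof (intro measurable_restrict)
  fix i :: "nat \<times> nat"
  show "(\<lambda>x. f (fst i) ((T ^^ snd i) x)) \<in> borel_measurable M"
    using measurable_compose[OF measurable_compose_n[OF Tm] fm] by simp
qed

lemma Psi_meas: "(\<lambda>\<omega>. \<lambda>i \<in> adm_index. Zdisc (fst i) (X (fst i) (snd i + 1) \<omega>)) \<in> P \<rightarrow>\<^sub>M PiM adm_index (\<lambda>_. borel)"
proof (intro measurable_restrict)
  fix i assume "i \<in> adm_index"
  then have "X (fst i) (snd i + 1) \<in> borel_measurable P" by (intro X_meas) (auto simp: adm_index_def)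
  then show "(\<lambda>\<omega>. Zdisc (fst i) (X (fst i) (snd i + 1) \<omega>)) \<in> borel_measurable P" by measurable
qed

lemmas tr = transfer[OF eq Phi_meas Psi_meas]

lemma idx: "i < 2 * dk k \<Longrightarrow> (k, i) \<in> adm_index" using k1 by (simp add: adm_index_def)

lemma tr_prod:
  assumes "i < 2 * dk k" "i' < 2 * dk k"
  shows "(\<integral>x. f k ((T ^^ i) x) * f k ((T ^^ i') x) \<partial>M) = (\<integral>w. Zdisc k (X k (i+1) w) * Zdisc k (X k (i'+1) w) \<partial>P)"
    "integrable M (\<lambda>x. f k ((T ^^ i) x) * f k ((T ^^ i') x))"
proof -
  define G where "G y = y (k, i) * y (k, i')" for y :: "nat \<times> nat \<Rightarrow> real"
  have Gm: "G \<in> borel_measurable (PiM adm_index (\<lambda>_. borel))"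
    unfolding G_def using idx[OF assms(1)] idx[OF assms(2)] by measurable
  have e1: "G ((\<lambda>i \<in> adm_index. f (fst i) ((T ^^ snd i) x))) = f k ((T ^^ i) x) * f k ((T ^^ i') x)" for x
    using idx[OF assms(1)] idx[OF assms(2)] by (simp add: G_def)
  have e2: "G ((\<lambda>i \<in> adm_index. Zdisc (fst i) (X (fst i) (snd i + 1) w))) = Zdisc k (X k (i+1) w) * Zdisc k (X k (i'+1) w)" for w
    using idx[OF assms(1)] idx[OF assms(2)] by (simp add: G_def)
  show "(\<integral>x. f k ((T ^^ i) x) * f k ((T ^^ i') x) \<partial>M) = (\<integral>w. Zdisc k (X k (i+1) w) * Zdisc k (X k (i'+1) w) \<partial>P)"
    using tr(1)[OF Gm] unfolding e1 e2 .
  have ip: "integrable P (\<lambda>w. Zdisc k (X k (i+1) w) * Zdisc k (X k (i'+1) w))"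
  proof (rule finite_measure.integrable_const_bound[OF prob_space.axioms(1)[OF Pp], where B="4^k * 4^k"])
    show "AE w in P. norm (Zdisc k (X k (i+1) w) * Zdisc k (X k (i'+1) w)) \<le> 4^k * 4^k"
      by (auto simp: abs_mult intro!: mult_mono Zdisc_le Zdisc_nonneg simp: abs_of_nonneg[OF Zdisc_nonneg])
    show "(\<lambda>w. Zdisc k (X k (i+1) w) * Zdisc k (X k (i'+1) w)) \<in> borel_measurable P"
      using X_meas[OF k1, of "i+1"] X_meas[OF k1, of "i'+1"] by measurable
  qed
  show "integrable M (\<lambda>x. f k ((T ^^ i) x) * f k ((T ^^ i') x))"
    using tr(2)[OF Gm] ip unfolding e1 e2 by simp
qed

lemma tr_single:
  assumes "i < 2 * dk k"
  shows "(\<integral>x. f k ((T ^^ i) x) \<partial>M) = (\<integral>w. Zdisc k (X k (i+1) w) \<partial>P)"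
    "integrable M (\<lambda>x. f k ((T ^^ i) x))"
proof -
  define G where "G y = y (k, i)" for y :: "nat \<times> nat \<Rightarrow> real"
  have Gm: "G \<in> borel_measurable (PiM adm_index (\<lambda>_. borel))"
    unfolding G_def using idx[OF assms(1)] by measurable
  have e1: "G ((\<lambda>i \<in> adm_index. f (fst i) ((T ^^ snd i) x))) = f k ((T ^^ i) x)" for x
    using idx[OF assms(1)] by (simp add: G_def)
  have e2: "G ((\<lambda>i \<in> adm_index. Zdisc (fst i) (X (fst i) (snd i + 1) w))) = Zdisc k (X k (i+1) w)" for w
    using idx[OF assms(1)] by (simp add: G_def)
  show "(\<integral>x. f k ((T ^^ i) x) \<partial>M) = (\<integral>w. Zdisc k (X k (i+1) w) \<partial>P)"
    using tr(1)[OF Gm] unfolding e1 e2 .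
  have ip: "integrable P (\<lambda>w. Zdisc k (X k (i+1) w))"
  proof (rule finite_measure.integrable_const_bound[OF prob_space.axioms(1)[OF Pp], where B="4^k"])
    show "AE w in P. norm (Zdisc k (X k (i+1) w)) \<le> 4^k"
      by (auto intro!: Zdisc_le simp: abs_of_nonneg[OF Zdisc_nonneg])
    show "(\<lambda>w. Zdisc k (X k (i+1) w)) \<in> borel_measurable P"
      using X_meas[OF k1, of "i+1"] by measurable
  qed
  show "integrable M (\<lambda>x. f k ((T ^^ i) x))"
    using tr(2)[OF Gm] ip unfolding e1 e2 by simp
qed


lemma Zint: "1 \<le> m \<Longrightarrow> integrable P (\<lambda>w. Zdisc k (X k m w))"
  by (rule finite_measure.integrable_const_bound[OF prob_space.axioms(1)[OF Pp], where B="4^k"])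
     (auto intro!: Zdisc_le simp: abs_of_nonneg[OF Zdisc_nonneg] intro: measurable_compose[OF X_meas[OF k1] Zdisc_measurable])

lemma indep_prod:
  assumes "i \<noteq> i'"
  shows "(\<integral>w. Zdisc k (X k (i+1) w) * Zdisc k (X k (i'+1) w) \<partial>P) = (\<integral>w. Zdisc k (X k (i+1) w) \<partial>P) * (\<integral>w. Zdisc k (X k (i'+1) w) \<partial>P)"
proof -
  interpret P: prob_space P by (rule Pp)
  define V where "V p w = Zdisc (fst p) ((\<lambda>(k, m). X k m) p w)" for p :: "nat \<times> nat" and w
  have iv: "P.indep_vars (\<lambda>_. borel) (\<lambda>p w. Zdisc (fst p) ((\<lambda>(k, m). X k m) p w)) {(k, m). 1 \<le> k \<and> 1 \<le> m}"
    by (rule P.indep_vars_compose2[OF ind]) simp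
  have Veq: "V (k, m) = (\<lambda>w. Zdisc k (X k m w))" for m by (simp add: V_def fun_eq_iff)
  define J where "J = {(k, i+1), (k, i'+1)}"
  have J: "J \<subseteq> {(k, m). 1 \<le> k \<and> 1 \<le> m}" using k1 by (auto simp: J_def)
  have iv2: "P.indep_vars (\<lambda>_. borel) V J" unfolding V_def by (rule P.indep_vars_subset[OF iv J])
  have intV: "integrable P (V p)" if "p \<in> J" for p
    using that Zint by (auto simp: J_def Veq)
  have "(\<integral>w. (\<Prod>p\<in>J. V p w) \<partial>P) = (\<Prod>p\<in>J. integral\<^sup>L P (V p))"
    by (rule P.indep_vars_lebesgue_integral[OF _ iv2 intV]) (simp_all add: J_def)
  moreover have "(\<Prod>p\<in>J. V p w) = Zdisc k (X k (i+1) w) * Zdisc k (X k (i'+1) w)" for w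
    using assms by (simp add: J_def V_def)
  moreover have "(\<Prod>p\<in>J. integral\<^sup>L P (V p)) = (\<integral>w. Zdisc k (X k (i+1) w) \<partial>P) * (\<integral>w. Zdisc k (X k (i'+1) w) \<partial>P)"
    using assms by (simp add: J_def Veq)
  ultimately show ?thesis by simp
qed

definition "mu = (\<integral>x. f k x \<partial>M)"
definition "vv = (\<integral>x. f k x * f k x \<partial>M)"

lemma fk_int: "integrable M (f k)" and fk2_int: "integrable M (\<lambda>x. f k x * f k x)"
  using tr_single(2)[of 0] tr_prod(2)[of 0 0] dk_def by simp_all

lemma g_int: "integrable M (\<lambda>x. f k ((T ^^ i) x))"
  using fk_int integrable_shift[OF mpt fm, of k i] by simp

lemma g_mean: "(\<integral>x. f k ((T ^^ i) x) \<partial>M) = mu"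
  unfolding mu_def by (rule integral_shift[OF mpt fm])

lemma g_sq: "(\<integral>x. f k ((T ^^ i) x) * f k ((T ^^ i) x) \<partial>M) = vv"
  unfolding vv_def using fm by (intro integral_shift[OF mpt, where F="\<lambda>x. f k x * f k x"]) measurable

lemma g_sq_int: "integrable M (\<lambda>x. f k ((T ^^ i) x) * f k ((T ^^ i) x))"
  using fk2_int integrable_shift[OF mpt, where F="\<lambda>x. f k x * f k x"] fm by simp

lemma cov:
  assumes "i < 2 * dk k" "i' < 2 * dk k"
  shows "(\<integral>x. (f k ((T ^^ i) x) - mu) * (f k ((T ^^ i') x) - mu) \<partial>M) = (if i = i' then vv - mu\<^sup>2 else 0)"
    "integrable M (\<lambda>x. (f k ((T ^^ i) x) - mu) * (f k ((T ^^ i') x) - mu))"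
proof -
  interpret M: prob_space M by (rule Mp)
  have e: "(f k ((T ^^ i) x) - mu) * (f k ((T ^^ i') x) - mu) =
     f k ((T ^^ i) x) * f k ((T ^^ i') x) - mu * f k ((T ^^ i) x) - mu * f k ((T ^^ i') x) + mu\<^sup>2" for x
    by (simp add: algebra_simps power2_eq_square)
  have i1: "integrable M (\<lambda>x. f k ((T ^^ i) x) * f k ((T ^^ i') x))" by (rule tr_prod(2)[OF assms])
  show "integrable M (\<lambda>x. (f k ((T ^^ i) x) - mu) * (f k ((T ^^ i') x) - mu))"
    unfolding e using i1 g_int by (auto simp: prob_space.prob_space[OF Mp])
  have "(\<integral>x. (f k ((T ^^ i) x) - mu) * (f k ((T ^^ i') x) - mu) \<partial>M) =
     (\<integral>x. f k ((T ^^ i) x) * f k ((T ^^ i') x) \<partial>M) - mu * mu - mu * mu + mu\<^sup>2"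
    unfolding e using i1 g_int by (simp add: g_mean prob_space.prob_space[OF Mp])
  also have "(\<integral>x. f k ((T ^^ i) x) * f k ((T ^^ i') x) \<partial>M) = (if i = i' then vv else mu * mu)"
  proof (cases "i = i'")
    case True then show ?thesis by (simp add: g_sq)
  next
    case False
    have "(\<integral>x. f k ((T ^^ i) x) * f k ((T ^^ i') x) \<partial>M) = (\<integral>w. Zdisc k (X k (i+1) w) \<partial>P) * (\<integral>w. Zdisc k (X k (i'+1) w) \<partial>P)"
      using tr_prod(1)[OF assms] indep_prod[OF False] by simp
    also have "\<dots> = mu * mu" using tr_single(1)[OF assms(1)] tr_single(1)[OF assms(2)] g_mean by simp
    finally show ?thesis using False by simp
  qed
  finally show "(\<integral>x. (f k ((T ^^ i) x) - mu) * (f k ((T ^^ i') x) - mu) \<partial>M) = (if i = i' then vv - mu\<^sup>2 else 0)"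
    by (simp add: power2_eq_square)
qed


lemma var_sum:
  assumes fin: "finite I" and sub: "I \<subseteq> {..<2 * dk k}"
  shows "(\<integral>x. (\<Sum>i\<in>I. w i * (f k ((T ^^ i) x) - mu))\<^sup>2 \<partial>M) = (vv - mu\<^sup>2) * (\<Sum>i\<in>I. (w i)\<^sup>2)"
    "integrable M (\<lambda>x. (\<Sum>i\<in>I. w i * (f k ((T ^^ i) x) - mu))\<^sup>2)"
proof -
  define c where "c i x = f k ((T ^^ i) x) - mu" for i x
  have e: "(\<Sum>i\<in>I. w i * c i x)\<^sup>2 = (\<Sum>i\<in>I. \<Sum>j\<in>I. (w i * w j) * (c i x * c j x))" for x
    by (simp add: power2_eq_square sum_product algebra_simps)
  have ci: "integrable M (\<lambda>x. c i x * c j x)" if "i \<in> I" "j \<in> I" for i j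
    unfolding c_def using sub that by (intro cov(2)) auto
  show "integrable M (\<lambda>x. (\<Sum>i\<in>I. w i * (f k ((T ^^ i) x) - mu))\<^sup>2)"
    unfolding c_def[symmetric] e
    by (intro Bochner_Integration.integrable_sum integrable_mult_right ci)
  have "(\<integral>x. (\<Sum>i\<in>I. w i * c i x)\<^sup>2 \<partial>M) = (\<Sum>i\<in>I. \<Sum>j\<in>I. (w i * w j) * (\<integral>x. c i x * c j x \<partial>M))"
    unfolding e
    by (simp add: Bochner_Integration.integral_sum Bochner_Integration.integrable_sum integrable_mult_right ci)
  also have "\<dots> = (\<Sum>i\<in>I. \<Sum>j\<in>I. if j = i then (w i * w j) * (vv - mu\<^sup>2) else 0)"
  proof (intro sum.cong refl)
    fix i j assume ij: "i \<in> I" "j \<in> I"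
    then have "i < 2 * dk k" "j < 2 * dk k" using sub by auto
    then show "(w i * w j) * (\<integral>x. c i x * c j x \<partial>M) = (if j = i then (w i * w j) * (vv - mu\<^sup>2) else 0)"
      unfolding c_def using cov(1)[of i j] by auto
  qed
  also have "\<dots> = (vv - mu\<^sup>2) * (\<Sum>i\<in>I. (w i)\<^sup>2)"
  proof -
    have "(\<Sum>i\<in>I. \<Sum>j\<in>I. if j = i then (w i * w j) * (vv - mu\<^sup>2) else 0) = (\<Sum>i\<in>I. (vv - mu\<^sup>2) * (w i)\<^sup>2)"
      using fin by (intro sum.cong refl) (simp add: power2_eq_square)
    also have "\<dots> = (vv - mu\<^sup>2) * (\<Sum>i\<in>I. (w i)\<^sup>2)" by (rule sum_distrib_left[symmetric])
    finally show ?thesis .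
  qed
  finally show "(\<integral>x. (\<Sum>i\<in>I. w i * (f k ((T ^^ i) x) - mu))\<^sup>2 \<partial>M) = (vv - mu\<^sup>2) * (\<Sum>i\<in>I. (w i)\<^sup>2)"
    unfolding c_def .
qed


lemma vv_nonneg: "0 \<le> vv"
  unfolding vv_def by (rule Bochner_Integration.integral_nonneg) simp

lemma D_bound:
  assumes lj: "l < j"
  shows "(\<integral>x. (birkhoff_sum T j (\<lambda>y. f k y - f k ((T ^^ dk k) y)) x
            - birkhoff_sum T l (\<lambda>y. f k y - f k ((T ^^ dk k) y)) x)\<^sup>2 \<partial>M) \<le> 4 * real (j - l) * vv"
proof -
  define h where "h y = f k y - f k ((T ^^ dk k) y)" for y
  define m where "m = j - l"
  define d where "d = dk k"
  define c where "c i x = f k ((T ^^ i) x) - mu" for i x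
  have jlm: "j = l + m" using lj by (simp add: m_def)
  have d1: "1 \<le> d" unfolding d_def dk_def by simp
  have cm: "c i \<in> borel_measurable M" for i unfolding c_def using g_meas by measurable
  have bsm: "birkhoff_sum T n h y = (\<Sum>i<n. c i y - c (i + d) y)" for n y
  proof -
    have "(T ^^ d) ((T ^^ i) y) = (T ^^ (i + d)) y" for i
      by (simp add: funpow_add add.commute[of i d])
    then show ?thesis unfolding birkhoff_sum_def h_def c_def d_def by (intro sum.cong) auto
  qed
  have bsmeas: "(\<lambda>y. (birkhoff_sum T m h y)\<^sup>2) \<in> borel_measurable M"
    unfolding bsm using cm by measurable
  have "(\<integral>x. (birkhoff_sum T j h x - birkhoff_sum T l h x)\<^sup>2 \<partial>M)
      = (\<integral>x. (birkhoff_sum T m h ((T ^^ l) x))\<^sup>2 \<partial>M)"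
    unfolding jlm birkhoff_split by simp
  also have "\<dots> = (\<integral>y. (birkhoff_sum T m h y)\<^sup>2 \<partial>M)"
    by (rule integral_shift[OF mpt bsmeas])
  also have "\<dots> \<le> 4 * real m * vv"
  proof (cases "m \<le> d")
    case True
    define I where "I = {..<m} \<union> {d..<d+m}"
    define w :: "nat \<Rightarrow> real" where "w i = (if i < d then 1 else -1)" for i
    have e: "birkhoff_sum T m h y = (\<Sum>i\<in>I. w i * (f k ((T ^^ i) y) - mu))" for y
      unfolding bsm I_def w_def using split_small[OF True, of "\<lambda>i. c i y"] by (simp add: c_def)
    have sub: "I \<subseteq> {..<2 * dk k}" using True by (auto simp: I_def d_def)
    have fin: "finite I" by (simp add: I_def)
    have "(\<integral>y. (birkhoff_sum T m h y)\<^sup>2 \<partial>M) = (vv - mu\<^sup>2) * (\<Sum>i\<in>I. (w i)\<^sup>2)"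
      unfolding e by (rule var_sum(1)[OF fin sub])
    also have "(\<Sum>i\<in>I. (w i)\<^sup>2) = real (card I)"
    proof -
      have "(\<Sum>i\<in>I. (w i)\<^sup>2) = (\<Sum>i\<in>I. 1)" by (intro sum.cong) (auto simp: w_def)
      then show ?thesis by simp
    qed
    also have "(vv - mu\<^sup>2) * real (card I) \<le> vv * real (card I)"
      by (intro mult_right_mono) auto
    also have "real (card I) \<le> 2 * real m"
    proof -
      have "card I \<le> card {..<m} + card {d..<d+m}" unfolding I_def by (rule card_Un_le)
      then show ?thesis by simp
    qed
    then have "vv * real (card I) \<le> vv * (2 * real m)" using vv_nonneg by (intro mult_left_mono) auto
    finally have "(\<integral>y. (birkhoff_sum T m h y)\<^sup>2 \<partial>M) \<le> 2 * (vv * real m)" by (simp add: algebra_simps)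
    moreover have "0 \<le> vv * real m" using vv_nonneg by simp
    ultimately show ?thesis by (simp add: algebra_simps)
  next
    case False
    define A where "A y = (\<Sum>i\<in>{..<d}. 1 * (f k ((T ^^ i) y) - mu))" for y
    have Am: "A \<in> borel_measurable M" unfolding A_def using g_meas by measurable
    have e: "birkhoff_sum T m h y = A y - A ((T ^^ m) y)" for y
    proof -
      have "(\<Sum>i<d. c (i + m) y) = (\<Sum>i<d. c i ((T ^^ m) y))"
        by (intro sum.cong) (auto simp: c_def funpow_add)
      then show ?thesis unfolding bsm using telesc[of d m "\<lambda>i. c i y"] False
        by (simp add: A_def c_def)
    qed
    have sub: "{..<d} \<subseteq> {..<2 * dk k}" by (auto simp: d_def)
    have A2: "(\<integral>y. (A y)\<^sup>2 \<partial>M) = (vv - mu\<^sup>2) * real d"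
      unfolding A_def using var_sum(1)[OF _ sub, of "\<lambda>_. 1"] by simp
    have A2i: "integrable M (\<lambda>y. (A y)\<^sup>2)"
      unfolding A_def using var_sum(2)[OF _ sub, of "\<lambda>_. 1"] by simp
    have A2m: "(\<lambda>y. (A y)\<^sup>2) \<in> borel_measurable M" using Am by measurable
    have A2s: "(\<integral>y. (A ((T ^^ m) y))\<^sup>2 \<partial>M) = (\<integral>y. (A y)\<^sup>2 \<partial>M)"
      by (rule integral_shift[OF mpt A2m])
    have A2si: "integrable M (\<lambda>y. (A ((T ^^ m) y))\<^sup>2)"
      using integrable_shift[OF mpt A2m] A2i by simp
    have "(\<integral>y. (birkhoff_sum T m h y)\<^sup>2 \<partial>M) \<le> (\<integral>y. 2 * (A y)\<^sup>2 + 2 * (A ((T ^^ m) y))\<^sup>2 \<partial>M)"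
    proof (rule integral_mono')
      show "integrable M (\<lambda>y. 2 * (A y)\<^sup>2 + 2 * (A ((T ^^ m) y))\<^sup>2)" using A2i A2si by auto
      show "(birkhoff_sum T m h y)\<^sup>2 \<le> 2 * (A y)\<^sup>2 + 2 * (A ((T ^^ m) y))\<^sup>2" for y
        unfolding e using zero_le_power2[of "A y + A ((T ^^ m) y)"] by (simp add: power2_eq_square algebra_simps)
      show "0 \<le> 2 * (A y)\<^sup>2 + 2 * (A ((T ^^ m) y))\<^sup>2" for y by simp
    qed
    also have "\<dots> = 2 * (\<integral>y. (A y)\<^sup>2 \<partial>M) + 2 * (\<integral>y. (A ((T ^^ m) y))\<^sup>2 \<partial>M)"
      using A2i A2si by (subst Bochner_Integration.integral_add) auto
    also have "\<dots> = 4 * ((vv - mu\<^sup>2) * real d)"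
      unfolding A2s A2 by simp
    also have "\<dots> \<le> 4 * (vv * real m)"
    proof -
      have "(vv - mu\<^sup>2) * real d \<le> vv * real d" by (intro mult_right_mono) auto
      also have "\<dots> \<le> vv * real m" using False vv_nonneg by (intro mult_left_mono) auto
      finally show ?thesis by simp
    qed
    finally show ?thesis by (simp add: algebra_simps)
  qed
  finally show ?thesis unfolding h_def m_def .
qed

end



theorem lemma4p9:
  fixes M :: "'a measure" and T :: "'a \<Rightarrow> 'a" and f :: "nat \<Rightarrow> 'a \<Rightarrow> real" and \<alpha> :: real
  assumes "prob_space M" and "mpt M T" and "ergodic M T" and "aperiodic M T"
    and "1 \<le> \<alpha>" and "\<alpha> < 2"
    and "admissible \<alpha> M T f"
  shows "\<exists>C > 0. \<forall>n l j k. 1 \<le> l \<longrightarrow> l < j \<longrightarrow> j \<le> n \<longrightarrow> 1 \<le> k \<longrightarrow> real k \<le> sqrt (log 2 (real n)) \<longrightarrow>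
     (\<integral>x. (birkhoff_sum T j (\<lambda>y. f k y - f k ((T ^^ dk k) y)) x
            - birkhoff_sum T l (\<lambda>y. f k y - f k ((T ^^ dk k) y)) x)\<^sup>2 \<partial>M)
     \<le> C * real (j - l) * 4 powr ((2 - \<alpha>) * real k) / real k"
proof -
  note Mp = assms(1) and mpt = assms(2) and a1 = assms(5) and a2 = assms(6)
  obtain P :: "(nat \<Rightarrow> nat \<Rightarrow> real) measure" and X :: "nat \<Rightarrow> nat \<Rightarrow> (nat \<Rightarrow> nat \<Rightarrow> real) \<Rightarrow> real"
    where fm: "\<And>k. f k \<in> borel_measurable M" and Pp: "prob_space P"
      and ind: "prob_space.indep_vars P (\<lambda>_. borel) (\<lambda>(k, m). X k m) {(k, m). 1 \<le> k \<and> 1 \<le> m}"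
      and ch: "\<And>k m. 1 \<le> k \<Longrightarrow> 1 \<le> m \<Longrightarrow>
           char (distr P borel (X k m)) = stable_cf \<alpha> (real k powr (-1 / \<alpha>)) 1 0"
      and eq: "distr M (PiM adm_index (\<lambda>_. borel))
             (\<lambda>x. \<lambda>i \<in> adm_index. f (fst i) ((T ^^ snd i) x))
        = distr P (PiM adm_index (\<lambda>_. borel))
             (\<lambda>\<omega>. \<lambda>i \<in> adm_index. Zdisc (fst i) (X (fst i) (snd i + 1) \<omega>))"
    using assms(7) unfolding admissible_def by blast
  show ?thesis
  proof (intro exI[of _ "4 * C1 \<alpha>"] conjI allI impI)
    show "0 < 4 * C1 \<alpha>" using C1_pos[OF a2] by simp
    fix n l j k :: nat
    assume lj: "1 \<le> l" "l < j" "j \<le> n" and k1: "1 \<le> k" and "real k \<le> sqrt (log 2 (real n))"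
    note ctx = Mp mpt fm Pp ind eq k1
    have D: "(\<integral>x. (birkhoff_sum T j (\<lambda>y. f k y - f k ((T ^^ dk k) y)) x
            - birkhoff_sum T l (\<lambda>y. f k y - f k ((T ^^ dk k) y)) x)\<^sup>2 \<partial>M) \<le> 4 * real (j - l) * vv M f k"
      by (rule D_bound[OF ctx lj(2)])
    have Xm: "X k 1 \<in> borel_measurable P" by (rule X_meas[OF ctx k1]) simp
    have d0: "0 < 2 * dk k" by (simp add: dk_def)
    have "vv M f k = (\<integral>x. f k ((T ^^ 0) x) * f k ((T ^^ 0) x) \<partial>M)" using vv_def[OF ctx] by simp
    also have "\<dots> = (\<integral>w. Zdisc k (X k (0+1) w) * Zdisc k (X k (0+1) w) \<partial>P)"
      by (rule tr_prod(1)[OF ctx d0 d0])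
    also have "\<dots> = (\<integral>w. (Zdisc k (X k 1 w))\<^sup>2 \<partial>P)" by (simp add: power2_eq_square)
    also have "\<dots> = (\<integral>x. (Zdisc k x)\<^sup>2 \<partial>distr P borel (X k 1))"
      by (rule integral_distr[symmetric, OF Xm]) measurable
    also have "\<dots> \<le> C1 \<alpha> * 4 powr ((2 - \<alpha>) * real k) / real k"
      by (rule moment_bound[OF prob_space.real_distribution_distr[OF Pp Xm] ch[OF k1] a1 a2 k1]) simp
    finally have vb: "vv M f k \<le> C1 \<alpha> * 4 powr ((2 - \<alpha>) * real k) / real k" .
    have "4 * real (j - l) * vv M f k \<le> 4 * real (j - l) * (C1 \<alpha> * 4 powr ((2 - \<alpha>) * real k) / real k)"
      using vb by (intro mult_left_mono) auto
    then show "(\<integral>x. (birkhoff_sum T j (\<lambda>y. f k y - f k ((T ^^ dk k) y)) x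
            - birkhoff_sum T l (\<lambda>y. f k y - f k ((T ^^ dk k) y)) x)\<^sup>2 \<partial>M)
     \<le> 4 * C1 \<alpha> * real (j - l) * 4 powr ((2 - \<alpha>) * real k) / real k"
      using D by (simp add: algebra_simps)
  qed
qed

end
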